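(* Let $\Delta\subset\mathbb{R}^n$ be an $n$-dimensional integral polytope containing the origin and having a unique codimension-1 face $\delta$ not containing the origin, with $\Delta$ the convex hull of $\delta$ and the origin. Let $A=\{V_1,\dots,V_J\}\subset\delta\cap\mathbb{Z}^n$ contain all vertices of $\delta$, and let $T=\{\delta_1,\dots,\delta_h\}$ be a regular decomposition of $(\delta,A)$ with associated concave function $\phi:\delta\to\mathbb{R}$. Let $r\in C(\Delta)$ and let $(u_1,\dots,u_J)$ be a rational solution of $\sum_{j=1}^J u_jV_j=r$, $u_j\ge0$, whose non-zero coordinates are $u_{j_1},\dots,u_{j_k}$. If $r\in\Sigma_i$, then $m(\phi,A;r)=\sum_{j=1}^J u_j\phi(V_j)$ if and only if $\Sigma_i$ contains all the lattice points $V_{j_1},\dots,V_{j_k}$.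
   Context: $C(\Delta)$ is the closed cone generated by $\Delta$ and the origin; $w(r)$ is the least $c\ge0$ with $r\in c\Delta$. A regular decomposition of $(\delta,A)$ is a collection of polytopes $\delta_1,\dots,\delta_h$ with vertices in $A$, of full dimension in $\delta$, whose union is $\delta$ and whose pairwise intersections have lower dimension, together with a piecewise linear function $\phi:\delta\to\mathbb{R}$ that is concave ($\phi(tx+(1-t)x')\ge t\phi(x)+(1-t)\phi(x')$) and whose domains of linearity are exactly the $\delta_i$. $\phi$ is extended to $C(\Delta)\setminus\{0\}$ by $\phi(r)=w(r)\phi(r/w(r))$. $\Sigma_i=C(\delta_i)$ is the closed cone generated by $\delta_i$ and the origin. For $r\in C(\Delta)$, $m(\phi,A;r)=\sup\{\sum_{j=1}^J u_j\phi(V_j) : \sum_j u_jV_j=r,\ u_j\ge0\}$. *)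

theory Defs
  imports "HOL-Analysis.Analysis"
begin

definition integral_point :: "real^'n \<Rightarrow> bool" where
  "integral_point x \<longleftrightarrow> (\<forall>i. x $ i \<in> \<int>)"

definition integral_polytope :: "(real^'n) set \<Rightarrow> bool" where
  "integral_polytope P \<longleftrightarrow> polytope P \<and> (\<forall>v. v extreme_point_of P \<longrightarrow> integral_point v)"

definition gen_cone :: "(real^'n) set \<Rightarrow> (real^'n) set" where
  "gen_cone S = closure (cone hull (insert 0 S))"

definition affine_on :: "(real^'n) set \<Rightarrow> (real^'n \<Rightarrow> real) \<Rightarrow> bool" where
  "affine_on S f \<longleftrightarrow> (\<exists>a b. \<forall>x\<in>S. f x = a \<bullet> x + b)"

definition linearity_domain :: "(real^'n) set \<Rightarrow> (real^'n \<Rightarrow> real) \<Rightarrow> (real^'n) set \<Rightarrow> bool" where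
  "linearity_domain \<delta> \<phi> S \<longleftrightarrow> convex S \<and> S \<noteq> {} \<and> S \<subseteq> \<delta> \<and> affine_on S \<phi> \<and>
     (\<forall>S'. convex S' \<and> S \<subseteq> S' \<and> S' \<subseteq> \<delta> \<and> affine_on S' \<phi> \<longrightarrow> S' = S)"

definition regular_decomposition ::
  "(real^'n) set \<Rightarrow> (real^'n) set \<Rightarrow> nat \<Rightarrow> (nat \<Rightarrow> (real^'n) set) \<Rightarrow> (real^'n \<Rightarrow> real) \<Rightarrow> bool" where
  "regular_decomposition \<delta> A h D \<phi> \<longleftrightarrow>
     (\<forall>i<h. polytope (D i) \<and> (\<forall>v. v extreme_point_of D i \<longrightarrow> v \<in> A)
            \<and> aff_dim (D i) = aff_dim \<delta>) \<and>
     (\<Union>i<h. D i) = \<delta> \<and>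
     (\<forall>i<h. \<forall>k<h. i \<noteq> k \<longrightarrow> aff_dim (D i \<inter> D k) < aff_dim \<delta>) \<and>
     concave_on \<delta> \<phi> \<and>
     {S. linearity_domain \<delta> \<phi> S} = D ` {..<h}"

definition m_sup :: "(real^'n \<Rightarrow> real) \<Rightarrow> nat \<Rightarrow> (nat \<Rightarrow> real^'n) \<Rightarrow> real^'n \<Rightarrow> real" where
  "m_sup \<phi> J V r = Sup {(\<Sum>j<J. u j * \<phi> (V j)) | u.
       (\<forall>j<J. u j \<ge> 0) \<and> (\<Sum>j<J. u j *\<^sub>R V j) = r}"

end

theory Submission
  imports Defs
begin

theorem mainTheorem2:
  fixes \<Delta> \<delta> :: "(real^'n) set"
    and J h :: nat and V :: "nat \<Rightarrow> real^'n"
    and D :: "nat \<Rightarrow> (real^'n) set" and \<phi> :: "real^'n \<Rightarrow> real"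
    and r :: "real^'n" and u :: "nat \<Rightarrow> real" and i :: nat
  assumes "integral_polytope \<Delta>"
    and "aff_dim \<Delta> = int CARD('n)"
    and "0 \<in> \<Delta>"
    and "\<delta> facet_of \<Delta>" and "0 \<notin> \<delta>"
    and "\<forall>F. F facet_of \<Delta> \<and> 0 \<notin> F \<longrightarrow> F = \<delta>"
    and "\<Delta> = convex hull (insert 0 \<delta>)"
    and "inj_on V {..<J}"
    and "\<forall>j<J. V j \<in> \<delta> \<and> integral_point (V j)"
    and "\<forall>v. v extreme_point_of \<delta> \<longrightarrow> v \<in> V ` {..<J}"
    and "regular_decomposition \<delta> (V ` {..<J}) h D \<phi>"
    and "r \<in> gen_cone \<Delta>"
    and "\<forall>j<J. u j \<in> \<rat> \<and> u j \<ge> 0"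
    and "(\<Sum>j<J. u j *\<^sub>R V j) = r"
    and "i < h"
    and "r \<in> gen_cone (D i)"
  shows "m_sup \<phi> J V r = (\<Sum>j<J. u j * \<phi> (V j)) \<longleftrightarrow>
         (\<forall>j<J. u j \<noteq> 0 \<longrightarrow> V j \<in> gen_cone (D i))"
proof -
  note rd = assms(11)[unfolded regular_decomposition_def]
  define Di where "Di = D i"
  have rd1: "\<forall>i<h. polytope (D i) \<and> (\<forall>v. v extreme_point_of D i \<longrightarrow> v \<in> V ` {..<J})
            \<and> aff_dim (D i) = aff_dim \<delta>" using rd by (rule conjunct1)
  have rd2: "(\<Union>i<h. D i) = \<delta>" using rd by (rule conjunct1[OF conjunct2])
  have conc: "concave_on \<delta> \<phi>" using rd by (rule conjunct1[OF conjunct2[OF conjunct2[OF conjunct2]]])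
  have rd5: "{S. linearity_domain \<delta> \<phi> S} = D ` {..<h}" using rd by (rule conjunct2[OF conjunct2[OF conjunct2[OF conjunct2]]])
  have "polytope (D i) \<and> (\<forall>v. v extreme_point_of D i \<longrightarrow> v \<in> V ` {..<J})
            \<and> aff_dim (D i) = aff_dim \<delta>" using rd1 assms(15) by simp
  then have polyD: "polytope Di" and extD: "\<forall>v. v extreme_point_of Di \<longrightarrow> v \<in> V ` {..<J}"
    and affD: "aff_dim Di = aff_dim \<delta>" unfolding Di_def by blast+
  have Dsub: "Di \<subseteq> \<delta>" using rd2 assms(15) unfolding Di_def by blast
  have "Di \<in> D ` {..<h}" using assms(15) Di_def by blast
  then have ld: "linearity_domain \<delta> \<phi> Di" using rd5 by blast
  then have Dne: "Di \<noteq> {}" and convD: "convex Di" and affon: "affine_on Di \<phi>"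
    and maxD: "\<And>S'. convex S' \<Longrightarrow> Di \<subseteq> S' \<Longrightarrow> S' \<subseteq> \<delta> \<Longrightarrow> affine_on S' \<phi> \<Longrightarrow> S' = Di"
    unfolding linearity_domain_def by blast+
  have polyhedron: "polyhedron \<Delta>"
    using assms(1) integral_polytope_def polytope_imp_polyhedron by blast
  obtain a b where a0: "a \<noteq> 0" and Dle: "\<Delta> \<subseteq> {x. a \<bullet> x \<le> b}"
    and deq: "\<delta> = \<Delta> \<inter> {x. a \<bullet> x = b}"
    using facet_of_polyhedron[OF polyhedron assms(4)] by blast
  have b0: "b \<noteq> 0" using assms(3,5) deq by auto
  have hyp: "\<And>x. x \<in> \<delta> \<Longrightarrow> a \<bullet> x = b" using deq by blast
  have convd: "convex \<delta>" using assms(4) facet_of_imp_face_of face_of_imp_convex by blast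
  obtain c d where cd: "\<forall>x\<in>Di. \<phi> x = c \<bullet> x + d" using affon affine_on_def by blast
  define w where "w = c + (d/b) *\<^sub>R a"
  have wd: "w \<bullet> x = c \<bullet> x + d" if "x \<in> \<delta>" for x
    using hyp[OF that] b0 by (simp add: w_def inner_add_left)
  have phiD: "\<phi> x = w \<bullet> x" if "x \<in> Di" for x
    using cd that wd Dsub by auto
  have concI: "\<And>x y p q. x \<in> \<delta> \<Longrightarrow> y \<in> \<delta> \<Longrightarrow> p \<ge> 0 \<Longrightarrow> q \<ge> 0 \<Longrightarrow> p + q = 1 \<Longrightarrow>
     \<phi> (p *\<^sub>R x + q *\<^sub>R y) \<ge> p * \<phi> x + q * \<phi> y"
    using conc unfolding concave_on_iff by blast
  have ahull: "affine hull Di = affine hull \<delta>"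
  proof (rule affine_dim_equal)
    show "affine hull Di \<subseteq> affine hull \<delta>" using Dsub by (rule hull_mono)
  qed (use Dne affD in auto)
  obtain y where yD: "y \<in> rel_interior Di"
    using rel_interior_eq_empty[OF convD] Dne by blast
  then obtain e where e0: "e > 0" and eb: "ball y e \<inter> affine hull Di \<subseteq> Di"
    and yDi: "y \<in> Di"
    using mem_rel_interior_ball by blast
  have bound: "\<phi> x \<le> w \<bullet> x" if xd: "x \<in> \<delta>" for x
  proof (cases "x = y")
    case True then show ?thesis using phiD yDi by simp
  next
    case False
    define t where "t = e / (2 * norm (y - x))"
    have np: "norm (y - x) > 0" using False by simp
    have t0: "t > 0" using e0 np by (simp add: t_def)
    define y' where "y' = (1 + t) *\<^sub>R y + (- t) *\<^sub>R x"
    have "y' \<in> affine hull Di"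
      unfolding y'_def
      by (rule mem_affine) (use yDi xd ahull in \<open>auto intro: hull_inc\<close>)
    moreover have "dist y y' < e"
    proof -
      have "y - y' = t *\<^sub>R (x - y)" by (simp add: y'_def algebra_simps)
      then have "dist y y' = t * norm (y - x)"
        by (simp add: dist_norm norm_minus_commute t0 less_imp_le)
      also have "\<dots> = e / 2" using np by (simp add: t_def)
      finally show ?thesis using e0 by simp
    qed
    ultimately have y'D: "y' \<in> Di" using eb by auto
    define p where "p = 1 / (1 + t)"
    define q where "q = t / (1 + t)"
    have pq: "p \<ge> 0" "q \<ge> 0" "p + q = 1" using t0
      by (auto simp: p_def q_def field_simps)
    have yeq: "p *\<^sub>R y' + q *\<^sub>R x = y"
    proof -
      have "p *\<^sub>R y' + q *\<^sub>R x = (p*(1+t)) *\<^sub>R y + (q - p*t) *\<^sub>R x"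
        by (simp add: y'_def algebra_simps)
      moreover have "p*(1+t) = 1" using t0 by (simp add: p_def)
      moreover have "q - p*t = 0" by (simp add: p_def q_def)
      ultimately show ?thesis by simp
    qed
    have "\<phi> y \<ge> p * \<phi> y' + q * \<phi> x"
      using concI[OF _ xd pq] y'D Dsub yeq by auto
    moreover have "w \<bullet> y = p * (w \<bullet> y') + q * (w \<bullet> x)"
      using yeq by (metis inner_add_right inner_scaleR_right)
    ultimately have "q * \<phi> x \<le> q * (w \<bullet> x)"
      using phiD yDi y'D by auto
    moreover have "q > 0" using t0 by (simp add: q_def)
    ultimately show ?thesis by simp
  qed
  have eqD: "x \<in> Di" if xd: "x \<in> \<delta>" and px: "\<phi> x = w \<bullet> x" for x
  proof -
    define S' where "S' = convex hull (insert x Di)"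
    have S'sub: "S' \<subseteq> \<delta>" unfolding S'_def
      by (rule hull_minimal) (use xd Dsub convd in auto)
    have "affine_on S' \<phi>"
      unfolding affine_on_def
    proof (intro exI ballI)
      fix z assume zS: "z \<in> S'"
      then obtain p q z' where pq: "p \<ge> 0" "q \<ge> 0" "p + q = 1" and z'D: "z' \<in> Di"
        and zeq: "z = p *\<^sub>R x + q *\<^sub>R z'"
        unfolding S'_def convex_hull_insert[OF Dne] convex_hull_eq[THEN iffD2, OF convD] by blast
      have "\<phi> z \<ge> p * \<phi> x + q * \<phi> z'"
        using concI[OF xd _ pq] z'D Dsub zeq by auto
      moreover have "w \<bullet> z = p * (w \<bullet> x) + q * (w \<bullet> z')"
        using zeq by (metis inner_add_right inner_scaleR_right)
      ultimately have "\<phi> z \<ge> w \<bullet> z" using px phiD z'D by auto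
      moreover have "\<phi> z \<le> w \<bullet> z" using bound zS S'sub by auto
      ultimately show "\<phi> z = w \<bullet> z + 0" by simp
    qed
    then have "S' = Di"
      by (intro maxD) (use S'sub in \<open>auto simp: S'_def hull_inc\<close>)
    then show ?thesis unfolding S'_def by (auto intro: hull_inc)
  qed
  have compD: "compact Di" using polyD polytope_imp_compact by blast
  have conic_cl: "closed (conic hull Di)"
    using closed_conic_hull[of Di] compD assms(5) Dsub by blast
  have gen_sub: "gen_cone Di \<subseteq> conic hull Di"
  proof -
    have "cone hull (insert 0 Di) \<subseteq> conic hull Di"
    proof
      fix z assume "z \<in> cone hull (insert 0 Di)"
      then obtain cc x where z: "z = cc *\<^sub>R x" "cc \<ge> 0" "x \<in> insert 0 Di"
        unfolding cone_hull_expl by blast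
      obtain x0 where "x0 \<in> Di" using Dne by blast
      then show "z \<in> conic hull Di" using z unfolding conic_hull_explicit
        by (cases "x = 0") force+
    qed
    then show ?thesis unfolding gen_cone_def
      using conic_cl closure_minimal by blast
  qed
  have conD: "z \<in> Di" if zg: "z \<in> gen_cone Di" and zd: "z \<in> \<delta>" for z
  proof -
    obtain t x where tx: "z = t *\<^sub>R x" "t \<ge> 0" "x \<in> Di"
      using zg gen_sub unfolding conic_hull_explicit by blast
    have "a \<bullet> z = b" using hyp zd by blast
    moreover have "a \<bullet> x = b" using hyp tx Dsub by blast
    ultimately have "t * b = b" using tx by simp
    then have "t = 1" using b0 by simp
    then show ?thesis using tx by simp
  qed
  have upper: "(\<Sum>j<J. v j * \<phi> (V j)) \<le> w \<bullet> r"
    if "\<forall>j<J. v j \<ge> 0" "(\<Sum>j<J. v j *\<^sub>R V j) = r" for v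
  proof -
    have "(\<Sum>j<J. v j * \<phi> (V j)) \<le> (\<Sum>j<J. v j * (w \<bullet> V j))"
      by (rule sum_mono) (use that bound assms(9) in \<open>auto intro: mult_left_mono\<close>)
    also have "\<dots> = w \<bullet> r" unfolding that(2)[symmetric]
      by (simp add: inner_sum_right)
    finally show ?thesis .
  qed
  have attain: "\<exists>v. (\<forall>j<J. v j \<ge> 0) \<and> (\<Sum>j<J. v j *\<^sub>R V j) = r \<and>
                 (\<Sum>j<J. v j * \<phi> (V j)) = w \<bullet> r"
  proof -
    obtain t x where tx: "r = t *\<^sub>R x" "t \<ge> 0" "x \<in> Di"
      using assms(16) gen_sub unfolding conic_hull_explicit Di_def by blast
    define K where "K = {j. j < J \<and> V j \<in> Di}"
    have Kfin: "finite K" and KJ: "K \<subseteq> {..<J}" by (auto simp: K_def)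
    have "{v. v extreme_point_of Di} \<subseteq> V ` K"
      using extD extreme_point_of_def unfolding K_def by blast
    then have "x \<in> convex hull (V ` K)"
      using Krein_Milman_Minkowski[OF compD convD] tx hull_mono by blast
    then obtain \<mu> where mu: "\<forall>p\<in>V ` K. 0 \<le> \<mu> p" "(\<Sum>p\<in>V ` K. \<mu> p *\<^sub>R p) = x"
      unfolding convex_hull_finite[OF finite_imageI[OF Kfin]] by blast
    have injK: "inj_on V K" using assms(8) KJ inj_on_subset by blast
    define v where "v j = (if j \<in> K then t * \<mu> (V j) else 0)" for j
    have vnn: "\<forall>j<J. v j \<ge> 0" using mu tx by (auto simp: v_def)
    have "(\<Sum>j<J. v j *\<^sub>R V j) = (\<Sum>j\<in>K. v j *\<^sub>R V j)"
      by (rule sum.mono_neutral_right) (use KJ in \<open>auto simp: v_def\<close>)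
    also have "\<dots> = t *\<^sub>R (\<Sum>j\<in>K. \<mu> (V j) *\<^sub>R V j)"
      by (simp add: v_def scaleR_sum_right)
    also have "(\<Sum>j\<in>K. \<mu> (V j) *\<^sub>R V j) = (\<Sum>p\<in>V ` K. \<mu> p *\<^sub>R p)"
      by (simp add: sum.reindex[OF injK])
    finally have vr: "(\<Sum>j<J. v j *\<^sub>R V j) = r" using mu tx by simp
    have "(\<Sum>j<J. v j * \<phi> (V j)) = (\<Sum>j<J. v j * (w \<bullet> V j))"
      by (rule sum.cong) (auto simp: v_def K_def phiD)
    also have "\<dots> = w \<bullet> r" unfolding vr[symmetric] by (simp add: inner_sum_right)
    finally show ?thesis using vnn vr by blast
  qed
  obtain v0 where v0: "\<forall>j<J. v0 j \<ge> 0" "(\<Sum>j<J. v0 j *\<^sub>R V j) = r"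
      "(\<Sum>j<J. v0 j * \<phi> (V j)) = w \<bullet> r"
    using attain by blast
  have msup: "m_sup \<phi> J V r = w \<bullet> r"
    unfolding m_sup_def
  proof (rule cSup_eq_maximum)
    show "w \<bullet> r \<in> {\<Sum>j<J. u j * \<phi> (V j) |u. (\<forall>j<J. 0 \<le> u j) \<and> (\<Sum>j<J. u j *\<^sub>R V j) = r}"
      apply (rule CollectI)
      apply (rule exI[of _ v0])
      using v0 by simp
  next
    fix x assume "x \<in> {\<Sum>j<J. u j * \<phi> (V j) |u. (\<forall>j<J. 0 \<le> u j) \<and> (\<Sum>j<J. u j *\<^sub>R V j) = r}"
    then obtain v where "x = (\<Sum>j<J. v j * \<phi> (V j))" "\<forall>j<J. 0 \<le> v j" "(\<Sum>j<J. v j *\<^sub>R V j) = r"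
      by blast
    then show "x \<le> w \<bullet> r" using upper by presburger
  qed
  have uw: "(\<Sum>j<J. u j * (w \<bullet> V j)) = w \<bullet> r"
    unfolding assms(14)[symmetric] by (simp add: inner_sum_right)
  have Vd: "V j \<in> \<delta>" if "j < J" for j using assms(9) that by blast
  have unn: "u j \<ge> 0" if "j < J" for j using assms(13) that by blast
  show ?thesis
  proof
    assume H: "m_sup \<phi> J V r = (\<Sum>j<J. u j * \<phi> (V j))"
    have "(\<Sum>j<J. u j * (w \<bullet> V j - \<phi> (V j))) = (\<Sum>j<J. u j * (w \<bullet> V j)) - (\<Sum>j<J. u j * \<phi> (V j))"
      by (simp add: right_diff_distrib sum_subtractf)
    also have "\<dots> = 0" using H msup uw by simp
    finally have s0: "(\<Sum>j<J. u j * (w \<bullet> V j - \<phi> (V j))) = 0" .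
    have nn: "\<forall>j\<in>{..<J}. 0 \<le> u j * (w \<bullet> V j - \<phi> (V j))"
    proof
      fix j assume "j \<in> {..<J}"
      then have "j < J" by simp
      then show "0 \<le> u j * (w \<bullet> V j - \<phi> (V j))"
        using unn[of j] bound[OF Vd[of j]] by simp
    qed
    have z: "\<forall>j\<in>{..<J}. u j * (w \<bullet> V j - \<phi> (V j)) = 0"
    proof -
      have "(\<Sum>j<J. u j * (w \<bullet> V j - \<phi> (V j))) = 0 \<longleftrightarrow>
            (\<forall>j\<in>{..<J}. u j * (w \<bullet> V j - \<phi> (V j)) = 0)"
        by (rule sum_nonneg_eq_0_iff[OF finite_lessThan]) (use nn in blast)
      then show ?thesis using s0 by blast
    qed
    show "\<forall>j<J. u j \<noteq> 0 \<longrightarrow> V j \<in> gen_cone (D i)"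
    proof (intro allI impI)
      fix j assume j: "j < J" "u j \<noteq> 0"
      then have "u j * (w \<bullet> V j - \<phi> (V j)) = 0" using z by blast
      then have "\<phi> (V j) = w \<bullet> V j" using j(2) by simp
      then have "V j \<in> Di" using eqD Vd j(1) by blast
      then show "V j \<in> gen_cone (D i)" unfolding gen_cone_def Di_def
        by (meson closure_subset hull_subset insertCI subsetD)
    qed
  next
    assume H: "\<forall>j<J. u j \<noteq> 0 \<longrightarrow> V j \<in> gen_cone (D i)"
    have "(\<Sum>j<J. u j * \<phi> (V j)) = (\<Sum>j<J. u j * (w \<bullet> V j))"
    proof (rule sum.cong)
      fix j assume "j \<in> {..<J}"
      then have j: "j < J" by simp
      show "u j * \<phi> (V j) = u j * (w \<bullet> V j)"
      proof (cases "u j = 0")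
        case False
        then have "V j \<in> gen_cone Di" using H j Di_def by blast
        then have "V j \<in> Di" using conD Vd j by blast
        then show ?thesis using phiD by simp
      qed simp
    qed simp
    then show "m_sup \<phi> J V r = (\<Sum>j<J. u j * \<phi> (V j))" using msup uw by simp
  qed
qed

end
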